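(* Let $\boldsymbol{\Sigma}\in\mathbb{R}^{d\times d}$ be a symmetric positive semidefinite matrix with eigenvalues $\lambda_1^\star\ge\lambda_2^\star\ge\dots\ge\lambda_d^\star$ and corresponding orthonormal eigenvectors $\mathbf{u}_1^\star,\dots,\mathbf{u}_d^\star$, and assume $1=\lambda_1^\star>\lambda_2^\star>\cdots$. Let $k\in\{1,\dots,d-1\}$, let $\mathbf{v}_{1,\ell-1},\dots,\mathbf{v}_{k-1,\ell-1}\in\mathbb{R}^d$ be unit vectors, define $$\boldsymbol{\Sigma}_{k,\ell}=\boldsymbol{\Sigma}-\sum_{k'=1}^{k-1}\big(\mathbf{v}_{k',\ell-1}^\top\boldsymbol{\Sigma}\mathbf{v}_{k',\ell-1}\big)\mathbf{v}_{k',\ell-1}\mathbf{v}_{k',\ell-1}^\top,$$ and let $\mathbf{u}_{k,\ell}$ denote the (unit-norm) top eigenvector of $\boldsymbol{\Sigma}_{k,\ell}$. If for some $c_0>1$ $$\sum_{k'=1}^{k-1}\lambda_{k'}^\star\|\mathbf{u}_{k'}^\star-\mathbf{v}_{k',\ell-1}\|_2\le\frac{c_0-1}{4c_0}\big(\lambda_k^\star-\lambda_{k+1}^\star\big),$$ then $$\|\mathbf{u}_{k,\ell}-\mathbf{u}_k^\star\|_2\le\frac{4c_0}{\lambda_k^\star-\lambda_{k+1}^\star}\sum_{k'=1}^{k-1}\lambda_{k'}^\star\|\mathbf{u}_{k'}^\star-\mathbf{v}_{k',\ell-1}\|_2 .$$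
   Context: The vectors $\mathbf{v}_{k',\ell-1}$ play the role of the current estimates (from communication round $\ell-1$) of the first $k-1$ eigenvectors in a parallel deflation scheme; $\boldsymbol{\Sigma}_{k,\ell}$ is the corresponding deflated matrix. The top eigenvector of a symmetric matrix is a unit eigenvector for its largest eigenvalue. *)

theory Defs
  imports "HOL-Analysis.Analysis"
begin

definition outer :: "real^'n \<Rightarrow> real^'n \<Rightarrow> real^'n^'n" where
  "outer v w = (\<chi> i j. v $ i * w $ j)"

definition deflated :: "real^'n^'n \<Rightarrow> (nat \<Rightarrow> real^'n) \<Rightarrow> nat \<Rightarrow> real^'n^'n" where
  "deflated S v k = S - (\<Sum>k'\<in>{1..<k}. (v k' \<bullet> (S *v v k')) *\<^sub>R outer (v k') (v k'))"

definition is_top_eigvec :: "real^'n^'n \<Rightarrow> real^'n \<Rightarrow> bool" where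
  "is_top_eigvec A w \<longleftrightarrow> norm w = 1 \<and>
     (\<exists>\<mu>. A *v w = \<mu> *\<^sub>R w \<and> (\<forall>\<nu> x. x \<noteq> 0 \<and> A *v x = \<nu> *\<^sub>R x \<longrightarrow> \<nu> \<le> \<mu>))"

end

theory Submission
  imports Defs
begin


lemma outer_mult: "outer v v *v x = (v \<bullet> x) *\<^sub>R (v::real^'n)"
  by (simp add: outer_def matrix_vector_mult_def inner_vec_def vec_eq_iff sum_distrib_left mult.commute mult.left_commute)

lemma sum_mv: "(sum f A) *v (x::real^'n) = (\<Sum>i\<in>A. f i *v x)"
  by (induct A rule: infinite_finite_induct) (auto simp: matrix_vector_mult_add_rdistrib)

lemma deflated_mult:
  "deflated S v k *v x = S *v x - (\<Sum>i\<in>{1..<k}. ((v i \<bullet> (S *v v i)) * (v i \<bullet> x)) *\<^sub>R v i)"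
  by (simp add: deflated_def matrix_vector_mult_diff_rdistrib sum_mv outer_mult
      flip: scaleR_matrix_vector_assoc)

lemma expand:
  fixes u :: "nat \<Rightarrow> real^'n"
  assumes orth: "\<forall>i\<in>{1..CARD('n)}. \<forall>j\<in>{1..CARD('n)}. u i \<bullet> u j = (if i = j then 1 else 0)"
  shows "x = (\<Sum>j\<in>{1..CARD('n)}. (x \<bullet> u j) *\<^sub>R u j)"
proof -
  let ?N = "{1..CARD('n)}"
  have inj: "inj_on u ?N"
  proof
    fix i j assume "i \<in> ?N" "j \<in> ?N" "u i = u j"
    then show "i = j" using orth by (metis one_neq_zero)
  qed
  have card: "card (u ` ?N) = CARD('n)" using inj by (simp add: card_image)
  have z: "0 \<notin> u ` ?N"
  proof
    assume "0 \<in> u ` ?N"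
    then obtain i where "i \<in> ?N" "u i = 0" by auto
    then show False using orth by force
  qed
  have po: "pairwise orthogonal (u ` ?N)"
    using orth unfolding pairwise_def orthogonal_def by auto
  have ind: "independent (u ` ?N)" by (rule pairwise_orthogonal_independent[OF po z])
  have "UNIV \<subseteq> span (u ` ?N)"
    using card_eq_dim[of "u ` ?N" UNIV] ind card by simp
  define y where "y = x - (\<Sum>j\<in>?N. (x \<bullet> u j) *\<^sub>R u j)"
  have yo: "y \<bullet> u i = 0" if "i \<in> ?N" for i
  proof -
    have "(\<Sum>j\<in>?N. (x \<bullet> u j) *\<^sub>R u j) \<bullet> u i = (\<Sum>j\<in>?N. (x \<bullet> u j) * (u j \<bullet> u i))"
      by (simp add: inner_sum_left)
    also have "\<dots> = (\<Sum>j\<in>?N. if j = i then x \<bullet> u i else 0)"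
      by (rule sum.cong) (use orth that in auto)
    also have "\<dots> = x \<bullet> u i" using that by simp
    finally show ?thesis by (simp add: y_def inner_diff_left)
  qed
  have "y \<in> span (u ` ?N)" using \<open>UNIV \<subseteq> _\<close> by auto
  then have "orthogonal y y"
    by (rule orthogonal_to_span) (use yo in \<open>auto simp: orthogonal_def\<close>)
  then have "y = 0" by (simp add: orthogonal_def)
  then show ?thesis by (simp add: y_def)
qed

lemma parseval:
  fixes u :: "nat \<Rightarrow> real^'n"
  assumes orth: "\<forall>i\<in>{1..CARD('n)}. \<forall>j\<in>{1..CARD('n)}. u i \<bullet> u j = (if i = j then 1 else 0)"
  shows "x \<bullet> y = (\<Sum>j\<in>{1..CARD('n)}. (x \<bullet> u j) * (y \<bullet> u j))"
proof -
  have "x \<bullet> y = (\<Sum>j\<in>{1..CARD('n)}. (x \<bullet> u j) *\<^sub>R u j) \<bullet> y"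
    using expand[OF orth, of x] by simp
  also have "\<dots> = (\<Sum>j\<in>{1..CARD('n)}. (x \<bullet> u j) * (u j \<bullet> y))"
    by (simp only: inner_sum_left inner_scaleR_left)
  also have "\<dots> = (\<Sum>j\<in>{1..CARD('n)}. (x \<bullet> u j) * (y \<bullet> u j))"
    by (simp only: inner_commute[of "u _" y])
  finally show ?thesis .
qed

lemma mv_sum: "(M::real^'n^'n) *v (\<Sum>j\<in>A. f j) = (\<Sum>j\<in>A. M *v f j)"
  by (induct A rule: infinite_finite_induct) (auto simp: matrix_vector_right_distrib)

lemma S_form:
  fixes u :: "nat \<Rightarrow> real^'n" and S :: "real^'n^'n"
  assumes orth: "\<forall>i\<in>{1..CARD('n)}. \<forall>j\<in>{1..CARD('n)}. u i \<bullet> u j = (if i = j then 1 else 0)"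
    and eig: "\<forall>i\<in>{1..CARD('n)}. S *v u i = lam i *\<^sub>R u i"
  shows "x \<bullet> (S *v y) = (\<Sum>j\<in>{1..CARD('n)}. lam j * (x \<bullet> u j) * (y \<bullet> u j))"
proof -
  have "S *v y = S *v (\<Sum>j\<in>{1..CARD('n)}. (y \<bullet> u j) *\<^sub>R u j)"
    using expand[OF orth, of y] by simp
  also have "\<dots> = (\<Sum>j\<in>{1..CARD('n)}. ((y \<bullet> u j) * lam j) *\<^sub>R u j)"
    by (simp add: mv_sum matrix_vector_mult_scaleR) (rule sum.cong, use eig in auto)
  finally show ?thesis
    by (simp add: inner_sum_right mult.commute mult.left_commute)
qed

lemma rayleigh_max:
  fixes M :: "real^'n^'n"
  assumes symf: "\<And>x y. x \<bullet> (M *v y) = y \<bullet> (M *v x)"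
  shows "\<exists>x0 R. norm x0 = 1 \<and> M *v x0 = R *\<^sub>R x0 \<and> (\<forall>z. z \<bullet> (M *v z) \<le> R * (norm z)^2)"
proof -
  let ?f = "\<lambda>x. x \<bullet> (M *v x)"
  have cont: "continuous_on (sphere 0 1) ?f"
    by (intro continuous_intros)
  obtain e :: "real^'n" where "norm e = 1" using vector_choose_size[of 1] by auto
  then have ne: "sphere (0::real^'n) 1 \<noteq> {}" by auto
  obtain x0 where x0: "x0 \<in> sphere 0 1" and mx: "\<And>y. y \<in> sphere 0 1 \<Longrightarrow> ?f y \<le> ?f x0"
    using continuous_attains_sup[OF compact_sphere ne cont] by blast
  define R where "R = ?f x0"
  have n1: "norm x0 = 1" using x0 by simp
  have bound: "?f z \<le> R * (norm z)^2" for z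
  proof (cases "z = 0")
    case True then show ?thesis by simp
  next
    case False
    then have nz: "norm z > 0" by simp
    have "(inverse (norm z) *\<^sub>R z) \<in> sphere 0 1" using nz by simp
    then have "?f (inverse (norm z) *\<^sub>R z) \<le> R" using mx R_def by blast
    moreover have "?f (inverse (norm z) *\<^sub>R z) = ?f z / (norm z)^2"
      by (simp add: matrix_vector_mult_scaleR power2_eq_square divide_inverse)
    ultimately have "?f z / (norm z)^2 \<le> R" by simp
    then show ?thesis using nz by (simp add: divide_le_eq mult.commute)
  qed
  define y where "y = M *v x0 - R *\<^sub>R x0"
  have yx: "y \<bullet> x0 = 0"
  proof -
    have "x0 \<bullet> x0 = 1" using n1 by (simp add: norm_eq_1)
    then show ?thesis by (simp add: y_def R_def inner_diff_left inner_diff_right inner_commute)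
  qed
  have yM: "y \<bullet> (M *v x0) = (norm y)^2"
  proof -
    have "M *v x0 = y + R *\<^sub>R x0" by (simp add: y_def)
    then show ?thesis using yx by (simp add: inner_add_right dot_square_norm)
  qed
  define q where "q = (norm y)^2"
  have key: "2 * t * q + t^2 * ?f y \<le> R * t^2 * q" for t
  proof -
    have "?f (x0 + t *\<^sub>R y) \<le> R * (norm (x0 + t *\<^sub>R y))^2" by (rule bound)
    moreover have "?f (x0 + t *\<^sub>R y) = R + 2 * t * q + t^2 * ?f y"
    proof -
      have "?f (x0 + t *\<^sub>R y) = ?f x0 + t * (x0 \<bullet> (M *v y)) + t * (y \<bullet> (M *v x0)) + t^2 * ?f y"
        by (simp add: matrix_vector_right_distrib matrix_vector_mult_scaleR inner_add_left
            inner_add_right power2_eq_square algebra_simps)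
      then show ?thesis using symf[of x0 y] yM by (simp add: R_def q_def)
    qed
    moreover have "(norm (x0 + t *\<^sub>R y))^2 = 1 + t^2 * q"
    proof -
      have "x0 \<bullet> x0 = 1" using n1 by (simp add: norm_eq_1)
      then show ?thesis using yx
        by (simp only: power2_norm_eq_inner q_def inner_add_left inner_add_right inner_scaleR_left
           inner_scaleR_right inner_commute[of x0 y]) (simp add: power2_eq_square)
    qed
    ultimately show ?thesis by (simp add: algebra_simps)
  qed
  have "q = 0"
  proof (rule ccontr)
    assume "q \<noteq> 0"
    then have qp: "q > 0" by (simp add: q_def)
    define C where "C = \<bar>R\<bar> * q + \<bar>?f y\<bar> + 1"
    have Cp: "C > 0" unfolding C_def using qp by (simp add: add_nonneg_pos)
    define t where "t = q / C"
    have tp: "t > 0" using qp Cp by (simp add: t_def)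
    have "2 * t * q \<le> t^2 * (R * q - ?f y)" using key[of t] by (simp add: algebra_simps)
    also have "\<dots> \<le> t^2 * C"
    proof -
      have "R * q - ?f y \<le> C" unfolding C_def using qp
        by (smt (verit) abs_ge_self abs_minus_cancel abs_mult abs_of_pos mult_minus_left abs_le_self_iff)
      then show ?thesis using tp by (simp add: mult_left_mono)
    qed
    also have "\<dots> = t * q" using Cp by (simp add: t_def power2_eq_square)
    finally have "2 * t * q \<le> t * q" .
    moreover have "t * q > 0" using tp qp by simp
    ultimately show False by linarith
  qed
  then have "y = 0" by (simp add: q_def)
  then have "M *v x0 = R *\<^sub>R x0" by (simp add: y_def)
  then show ?thesis using n1 bound by blast
qed

lemma test_vector:
  fixes u v :: "nat \<Rightarrow> real^'n"
  assumes orth: "\<forall>i\<in>{1..CARD('n)}. \<forall>j\<in>{1..CARD('n)}. u i \<bullet> u j = (if i = j then 1 else 0)"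
    and k: "1 \<le> k" "k \<le> CARD('n)"
  shows "\<exists>x. x \<noteq> 0 \<and> (\<forall>i\<in>{1..<k}. v i \<bullet> x = 0) \<and> (\<forall>j\<in>{1..CARD('n)}. k < j \<longrightarrow> x \<bullet> u j = 0)"
proof (rule ccontr)
  assume H: "\<not> ?thesis"
  let ?U = "u ` {1..k}"
  have inj: "inj_on u {1..k}"
  proof
    fix i j assume "i \<in> {1..k}" "j \<in> {1..k}" "u i = u j"
    then show "i = j" using orth k by (metis (no_types, lifting) atLeastAtMost_iff le_trans one_neq_zero)
  qed
  have card: "card ?U = k" using inj by (simp add: card_image)
  have z: "0 \<notin> ?U"
  proof
    assume "0 \<in> ?U"
    then obtain i where "i \<in> {1..k}" "u i = 0" by auto
    then show False using orth k by force
  qed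
  have po: "pairwise orthogonal ?U"
    using orth k unfolding pairwise_def orthogonal_def by fastforce
  have ind: "independent ?U" by (rule pairwise_orthogonal_independent[OF po z])
  have dimU: "dim ?U = k" using dim_eq_card_independent[OF ind] card by simp
  define L where "L = (\<lambda>x. \<Sum>i\<in>{1..<k}. (v i \<bullet> x) *\<^sub>R u i)"
  have lin: "linear L"
    unfolding L_def
    by (rule linearI) (simp_all add: inner_add_right scaleR_add_left sum.distrib scaleR_sum_right)
  have L0: "v j \<bullet> x = 0" if "L x = 0" "j \<in> {1..<k}" for x j
  proof -
    have "u j \<bullet> L x = (\<Sum>i\<in>{1..<k}. (v i \<bullet> x) * (u j \<bullet> u i))"
      by (simp add: L_def inner_sum_right)
    also have "\<dots> = (\<Sum>i\<in>{1..<k}. if i = j then v j \<bullet> x else 0)"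
      by (rule sum.cong) (use orth that k in auto)
    also have "\<dots> = v j \<bullet> x" using that by simp
    finally show ?thesis using that by simp
  qed
  have orthU: "x \<bullet> u j = 0" if "x \<in> span ?U" "j \<in> {1..CARD('n)}" "k < j" for x j
  proof -
    have "orthogonal (u j) x"
      by (rule orthogonal_to_span[OF that(1)]) (use orth that k in \<open>auto simp: orthogonal_def\<close>)
    then show ?thesis by (simp add: orthogonal_def inner_commute)
  qed
  have "inj_on L (span ?U)"
  proof (rule linear_inj_on_iff_eq_0[OF lin subspace_span, THEN iffD2], intro ballI impI)
    fix x assume x: "x \<in> span ?U" "L x = 0"
    show "x = 0" using H L0[OF x(2)] orthU[OF x(1)] by blast
  qed
  then have "dim (L ` ?U) = k" using dim_image_eq[OF lin] dimU by simp
  moreover have "dim (L ` ?U) \<le> k - 1"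
  proof -
    have "L ` ?U \<subseteq> span (u ` {1..<k})"
    proof
      fix y assume "y \<in> L ` ?U"
      then obtain x where "y = L x" by auto
      show "y \<in> span (u ` {1..<k})" unfolding \<open>y = L x\<close> L_def
        by (rule span_sum, rule span_scale, rule span_base) auto
    qed
    then have "dim (L ` ?U) \<le> card (u ` {1..<k})" by (rule dim_le_card) simp
    also have "\<dots> \<le> card {1..<k}" by (rule card_image_le) simp
    finally show ?thesis by simp
  qed
  ultimately show False using k by simp
qed



lemma r_energy:
  fixes l c q a d :: real
  assumes "0 \<le> l" "0 \<le> d" "0 \<le> a" "l - 2*l*d \<le> a" "\<bar>c\<bar> \<le> 1" "\<bar>q\<bar> \<le> 1" "\<bar>q - c\<bar> \<le> d"
  shows "l*c^2 - a*q^2 \<le> 4*l*d"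
proof -
  have e1: "c^2 - q^2 \<le> 2*d"
  proof -
    have "c^2 - q^2 = (c - q) * (c + q)" by (simp add: power2_eq_square algebra_simps)
    also have "\<dots> \<le> \<bar>c - q\<bar> * \<bar>c + q\<bar>" by (metis abs_ge_self abs_mult)
    also have "\<dots> \<le> d * 2"
      using assms by (intro mult_mono) (auto simp: abs_minus_commute)
    finally show ?thesis by simp
  qed
  have e2: "(l - a) * q^2 \<le> 2*l*d"
  proof -
    have q2: "q^2 \<le> 1" using assms(6) by (simp add: abs_square_le_1)
    show ?thesis
    proof (cases "l - a \<le> 0")
      case True then show ?thesis using assms by (smt (verit) mult_nonpos_nonneg zero_le_power2 mult_nonneg_nonneg)
    next
      case False
      then have "(l - a) * q^2 \<le> (l - a) * 1" using q2 by (intro mult_left_mono) auto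
      then show ?thesis using assms by simp
    qed
  qed
  have "l*c^2 - a*q^2 = l*(c^2 - q^2) + (l - a)*q^2" by (simp add: algebra_simps)
  also have "\<dots> \<le> l * (2*d) + 2*l*d" using e1 e2 assms(1) by (intro add_mono mult_left_mono) auto
  finally show ?thesis by (simp add: algebra_simps)
qed

lemma r_cbound:
  fixes l m a c eta rho d lk e :: real
  assumes eq: "(l - m)*c = a*(c+eta) + rho" and eta: "\<bar>eta\<bar> \<le> d"
    and al: "l - 2*l*d \<le> a" and a0: "0 \<le> a" and m: "lk \<le> m" and lk: "lk \<le> l"
    and ld: "l*d \<le> e" and d0: "0 \<le> d" and l0: "0 \<le> l" and D: "2*e < lk"
  shows "\<bar>c\<bar> * (lk - 2*e) \<le> l*d + \<bar>rho\<bar>"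
proof -
  define Z where "Z = a + m - l"
  define D where "D = lk - 2*e"
  have e0: "0 \<le> e" using ld l0 d0 by (smt (verit) mult_nonneg_nonneg)
  have Dp: "D > 0" using D by (simp add: D_def)
  have ZD: "D \<le> Z" unfolding Z_def D_def using al m ld by linarith
  have Zp: "Z > 0" using ZD Dp by linarith
  have Zc: "Z * c = - (a*eta + rho)" using eq by (simp add: Z_def algebra_simps)
  have "\<bar>c\<bar> * Z \<le> a*d + \<bar>rho\<bar>"
  proof -
    have "\<bar>c\<bar> * Z = \<bar>a*eta + rho\<bar>" using Zc Zp by (metis abs_minus_cancel abs_mult abs_of_pos mult.commute)
    also have "\<dots> \<le> \<bar>a*eta\<bar> + \<bar>rho\<bar>" by (rule abs_triangle_ineq)
    also have "\<bar>a*eta\<bar> \<le> a*d" using a0 eta by (simp add: abs_mult mult_left_mono)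
    finally show ?thesis by simp
  qed
  moreover have aD: "a * D \<le> l * Z"
  proof -
    have h1: "l*(l - m) \<le> l*(l - lk)" using m l0 by (simp add: mult_left_mono)
    have h2: "0 \<le> l - D" using lk e0 by (simp add: D_def)
    have h3: "(l - 2*l*d) * (l - D) \<le> a * (l - D)" using al h2 by (simp add: mult_right_mono)
    have h4: "l*(l - lk) \<le> (l - 2*l*d) * (l - D)"
    proof -
      have "(l - 2*l*d) * (l - D) - l*(l - lk) = 2*e*l - 2*(l*d)*(l - lk + 2*e)"
        by (simp add: D_def algebra_simps)
      moreover have "(l*d)*(l - lk + 2*e) \<le> e * l"
      proof -
        have "(l*d)*(l - lk + 2*e) \<le> e*(l - lk + 2*e)"
          using ld lk e0 by (intro mult_right_mono) auto
        also have "\<dots> \<le> e * l" using D e0 by (intro mult_left_mono) auto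
        finally show ?thesis .
      qed
      ultimately show ?thesis by (simp add: algebra_simps)
    qed
    have "a * D = a*l - a*(l - D)" by (simp add: algebra_simps)
    also have "\<dots> \<le> a*l - l*(l - m)" using h1 h3 h4 by linarith
    also have "\<dots> = l * Z" by (simp add: Z_def algebra_simps)
    finally show ?thesis .
  qed
  ultimately have "\<bar>c\<bar> * Z * D \<le> (a*d + \<bar>rho\<bar>) * D" using Dp by (simp add: mult_right_mono)
  also have "\<dots> = (a*D)*d + \<bar>rho\<bar>*D" by (simp add: algebra_simps)
  also have "\<dots> \<le> (l*Z)*d + \<bar>rho\<bar>*Z" using aD ZD d0 by (intro add_mono mult_right_mono mult_left_mono) auto
  finally have "(\<bar>c\<bar> * D) * Z \<le> (l*d + \<bar>rho\<bar>) * Z" by (simp add: algebra_simps)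
  then show ?thesis using Zp by (simp add: D_def)
qed

lemma r_X:
  fixes lk e X D :: real
  assumes "0 < lk" "0 \<le> e" "20*e \<le> 3*lk" "D = lk - 2*e" "0 \<le> X"
    and "X \<le> (e*e + e*X)/D + X*(e/lk)"
  shows "X \<le> e/2"
proof -
  have D: "D \<ge> 7/10*lk" using assms by simp
  have Dp: "D > 0" using D assms by simp
  have r1: "e/lk \<le> 3/20" using assms by (simp add: divide_le_eq)
  have r2: "e/D \<le> 3/14" using assms D Dp by (simp add: divide_le_eq)
  have "(e*e + e*X)/D = (e/D)*e + (e/D)*X" by (simp add: add_divide_distrib)
  also have "\<dots> \<le> (3/14)*e + (3/14)*X" using r2 assms by (intro add_mono mult_right_mono) auto
  finally have "X \<le> (3/14)*e + (3/14)*X + X*(3/20)"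
    using assms(6) r1 assms(5) by (smt (verit) mult_left_mono)
  then show ?thesis using assms(2) by linarith
qed


lemma r_big:
  fixes g e c0 n :: real
  assumes g: "g > 0" and e: "0 \<le> e" and big: "3*g \<le> 20*e" and sm: "4*c0*e \<le> (c0-1)*g"
    and c0: "c0 > 1" and n: "0 \<le> n" "n^2 \<le> 2"
  shows "n \<le> 4*c0/g*e"
proof -
  have "c0 * (g - 4*e) \<ge> g" using sm by (simp add: algebra_simps)
  moreover have "c0 * (g - 4*e) \<le> c0 * (2/5*g)" using big c0 by (intro mult_left_mono) auto
  ultimately have "g \<le> c0 * (2/5*g)" by linarith
  then have "1 * g \<le> (c0 * (2/5)) * g" by (simp add: algebra_simps)
  then have "1 \<le> c0 * (2/5)" using g by (rule mult_right_le_imp_le)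
  then have c5: "5/2 \<le> c0" by simp
  have eg: "3/20 * g \<le> e" using big by simp
  have "4*c0*e \<ge> 4*(5/2)*(3/20*g)" using c5 eg g by (intro mult_mono) auto
  then have "4*c0*e \<ge> 3/2*g" by simp
  then have R: "4*c0/g*e \<ge> 3/2" using g by (simp add: le_divide_eq mult.commute)
  have nn: "n^2 \<le> (3/2)^2" using n(2) by (simp add: power2_eq_square)
  have "n \<le> 3/2" by (rule power2_le_imp_le[OF nn]) simp
  then show ?thesis using R by linarith
qed


lemma r_final:
  fixes g e c0 n G :: real
  assumes g: "g > 0" and e: "0 \<le> e" and sm: "20*e < 3*g" and G: "G = g - 2*e"
    and c0: "c0 \<ge> 1" and n: "0 \<le> n" and b: "G^2 * n^2 \<le> 5*e^2"
  shows "n \<le> 4*c0/g*e"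
proof -
  have G7: "G \<ge> 7/10*g" using G sm by simp
  have Gp: "G > 0" using G7 g by simp
  have b2: "(G*n)^2 \<le> (sqrt 5 * e)^2" using b by (simp add: power_mult_distrib)
  have Gn: "G*n \<le> sqrt 5 * e" by (rule power2_le_imp_le[OF b2]) (simp add: e)
  have s5: "sqrt 5 \<le> 7/10 * 4" by (rule real_le_lsqrt) (auto simp: power2_eq_square)
  have "sqrt 5 * e \<le> (7/10*4) * e" using s5 e by (rule mult_right_mono)
  also have "\<dots> \<le> (7/10*4*c0) * e" using c0 e by (intro mult_right_mono) auto
  finally have "G * n \<le> 7/10*4*c0*e" using Gn by linarith
  moreover have "7/10*g*n \<le> G*n" using G7 n by (rule mult_right_mono)
  ultimately have "7/10*g*n \<le> 7/10*(4*c0*e)" by simp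
  then have "g*n \<le> 4*c0*e" by simp
  then show ?thesis using g by (simp add: field_simps)
qed


lemma r_sq:
  fixes x y :: real
  shows "(x + y)^2 \<le> 2*x^2 + 2*y^2"
proof -
  have "0 \<le> (x - y)^2" by simp
  then show ?thesis by (simp add: power2_eq_square algebra_simps)
qed



lemma split_sum:
  assumes "1 \<le> k" "k \<le> d"
  shows "(\<Sum>j\<in>{1..d}. f j) = (\<Sum>j\<in>{1..<k}. f j) + f k + (\<Sum>j\<in>{Suc k..d}. f j)"
proof -
  have "{1..d} = {1..<k} \<union> insert k {Suc k..d}" using assms by auto
  moreover have "{1..<k} \<inter> insert k {Suc k..d} = {}" by auto
  ultimately have "(\<Sum>j\<in>{1..d}. f j) = (\<Sum>j\<in>{1..<k}. f j) + (\<Sum>j\<in>insert k {Suc k..d}. f j)"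
    by (metis finite_atLeastAtMost finite_atLeastLessThan finite_insert sum.union_disjoint)
  then show ?thesis by (simp add: add.assoc)
qed

theorem lemma2:
  fixes S :: "real^'n^'n"
    and lam :: "nat \<Rightarrow> real"
    and u :: "nat \<Rightarrow> real^'n"
    and v :: "nat \<Rightarrow> real^'n"
    and w :: "real^'n"
    and k :: nat and c0 :: real
  assumes sym: "transpose S = S"
    and psd: "\<forall>x. 0 \<le> x \<bullet> (S *v x)"
    and eig: "\<forall>i\<in>{1..CARD('n)}. S *v u i = lam i *\<^sub>R u i"
    and orth: "\<forall>i\<in>{1..CARD('n)}. \<forall>j\<in>{1..CARD('n)}. u i \<bullet> u j = (if i = j then 1 else 0)"
    and lam1: "lam 1 = 1"
    and lam_dec: "\<forall>i\<in>{1..CARD('n)}. \<forall>j\<in>{1..CARD('n)}. i < j \<longrightarrow> lam j < lam i"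
    and k: "1 \<le> k" "k \<le> CARD('n) - 1"
    and vunit: "\<forall>k'\<in>{1..<k}. norm (v k') = 1"
    and top: "is_top_eigvec (deflated S v k) w"
    and sign: "0 \<le> w \<bullet> u k"
    and c0: "c0 > 1"
    and small: "(\<Sum>k'\<in>{1..<k}. lam k' * norm (u k' - v k'))
                  \<le> (c0 - 1) / (4 * c0) * (lam k - lam (k + 1))"
  shows "norm (w - u k) \<le> 4 * c0 / (lam k - lam (k + 1)) * (\<Sum>k'\<in>{1..<k}. lam k' * norm (u k' - v k'))"
proof -
  define d where "d = CARD('n)"
  define N where "N = {1..d}"
  define A where "A = {1..<k}"
  define B where "B = {Suc k..d}"
  define M where "M = deflated S v k"
  define a where "a i = v i \<bullet> (S *v v i)" for i
  define \<delta> where "\<delta> i = norm (u i - v i)" for i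
  define \<epsilon> where "\<epsilon> = (\<Sum>i\<in>A. lam i * \<delta> i)"
  define g where "g = lam k - lam (k + 1)"
  have kd: "k + 1 \<le> d" using k by (simp add: d_def)
  have kN: "k \<in> N" "k + 1 \<in> N" using k kd by (auto simp: N_def)
  have AN: "A \<subseteq> N" using kd by (auto simp: A_def N_def)
  have BN: "B \<subseteq> N" by (auto simp: B_def N_def)
  have orthN: "\<And>i j. i \<in> N \<Longrightarrow> j \<in> N \<Longrightarrow> u i \<bullet> u j = (if i = j then 1 else 0)"
    using orth by (simp add: N_def d_def)
  have eigN: "\<And>i. i \<in> N \<Longrightarrow> S *v u i = lam i *\<^sub>R u i" using eig by (simp add: N_def d_def)
  have decN: "\<And>i j. i \<in> N \<Longrightarrow> j \<in> N \<Longrightarrow> i < j \<Longrightarrow> lam j < lam i"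
    using lam_dec by (simp add: N_def d_def)
  have unorm: "norm (u i) = 1" if "i \<in> N" for i
    using orthN[OF that that] by (simp add: norm_eq_1)
  have lam_nn: "0 \<le> lam i" if "i \<in> N" for i
  proof -
    have "0 \<le> u i \<bullet> (S *v u i)" using psd by blast
    also have "\<dots> = lam i" using eigN[OF that] orthN[OF that that] by simp
    finally show ?thesis .
  qed
  have gpos: "g > 0" using decN[OF kN(1) kN(2)] by (simp add: g_def)
  have lkg: "g \<le> lam k" using lam_nn[OF kN(2)] by (simp add: g_def)
  have lamA: "lam k < lam i" if "i \<in> A" for i
    using decN[of i k] that AN kN by (auto simp: A_def)
  have vA: "norm (v i) = 1" if "i \<in> A" for i using vunit that by (simp add: A_def)
  have \<delta>0: "0 \<le> \<delta> i" for i by (simp add: \<delta>_def)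
  have \<epsilon>0: "0 \<le> \<epsilon>" unfolding \<epsilon>_def using lam_nn AN \<delta>0
    by (intro sum_nonneg) (meson mult_nonneg_nonneg subsetD)
  have termnn: "0 \<le> lam i * \<delta> i" if "i \<in> A" for i
    using lam_nn AN \<delta>0 that by (meson mult_nonneg_nonneg subsetD)
  have \<epsilon>i: "lam i * \<delta> i \<le> \<epsilon>" if "i \<in> A" for i
    unfolding \<epsilon>_def by (rule member_le_sum) (use that termnn in \<open>auto simp: A_def\<close>)
  have sform: "x \<bullet> (S *v y) = (\<Sum>j\<in>N. lam j * (x \<bullet> u j) * (y \<bullet> u j))" for x y
    unfolding N_def d_def by (rule S_form[OF orth eig])
  have Ssym: "x \<bullet> (S *v y) = y \<bullet> (S *v x)" for x y
    unfolding sform by (simp add: mult.commute mult.left_commute)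
  have Sui: "x \<bullet> (S *v u i) = lam i * (x \<bullet> u i)" if "i \<in> N" for x i
    using eigN[OF that] by simp
  have pars: "x \<bullet> y = (\<Sum>j\<in>N. (x \<bullet> u j) * (y \<bullet> u j))" for x y
    unfolding N_def d_def by (rule parseval[OF orth])
  have Mx: "M *v x = S *v x - (\<Sum>i\<in>A. (a i * (v i \<bullet> x)) *\<^sub>R v i)" for x
    by (simp add: M_def A_def a_def deflated_mult)
  have Mq: "y \<bullet> (M *v x) = y \<bullet> (S *v x) - (\<Sum>i\<in>A. a i * (v i \<bullet> x) * (v i \<bullet> y))" for x y
    by (simp add: Mx inner_diff_right inner_sum_right mult.assoc inner_commute)
  have Msym: "x \<bullet> (M *v y) = y \<bullet> (M *v x)" for x y
    unfolding Mq using Ssym[of x y] by (simp add: mult.commute mult.left_commute)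
  have a_nn: "0 \<le> a i" for i using psd by (simp add: a_def)
  have a_lb: "lam i - 2 * lam i * \<delta> i \<le> a i" if "i \<in> A" for i
  proof -
    have iN: "i \<in> N" using that AN by auto
    define e where "e = v i - u i"
    have ve: "v i = u i + e" by (simp add: e_def)
    have "a i = u i \<bullet> (S *v u i) + u i \<bullet> (S *v e) + e \<bullet> (S *v u i) + e \<bullet> (S *v e)"
      by (simp add: a_def ve matrix_vector_right_distrib inner_add_left inner_add_right)
    also have "\<dots> = lam i + 2 * (lam i * (e \<bullet> u i)) + e \<bullet> (S *v e)"
      using Sui[OF iN, of "u i"] Sui[OF iN, of e] Ssym[of "u i" e] orthN[OF iN iN] by simp
    finally have aeq: "a i = lam i + 2 * (lam i * (e \<bullet> u i)) + e \<bullet> (S *v e)" .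
    have "\<bar>e \<bullet> u i\<bar> \<le> norm e * norm (u i)" by (rule Cauchy_Schwarz_ineq2)
    also have "\<dots> = \<delta> i" using unorm[OF iN] by (simp add: e_def \<delta>_def norm_minus_commute)
    finally have "- \<delta> i \<le> e \<bullet> u i" by linarith
    then have "lam i * (- \<delta> i) \<le> lam i * (e \<bullet> u i)" using lam_nn[OF iN] by (rule mult_left_mono)
    moreover have "0 \<le> e \<bullet> (S *v e)" using psd by blast
    ultimately show ?thesis using aeq by simp
  qed
  obtain \<mu> where w1: "norm w = 1" and Mw: "M *v w = \<mu> *\<^sub>R w"
    and topv: "\<And>\<nu> x. x \<noteq> 0 \<Longrightarrow> M *v x = \<nu> *\<^sub>R x \<Longrightarrow> \<nu> \<le> \<mu>"
  proof -
    from top obtain \<mu> where "norm w = 1" "M *v w = \<mu> *\<^sub>R w"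
      "\<forall>\<nu> x. x \<noteq> 0 \<and> M *v x = \<nu> *\<^sub>R x \<longrightarrow> \<nu> \<le> \<mu>"
      unfolding is_top_eigvec_def M_def by auto
    then show ?thesis using that by blast
  qed
  have mu_lb: "lam k \<le> \<mu>"
  proof -
    obtain x0 R where x0: "norm x0 = 1" "M *v x0 = R *\<^sub>R x0"
      and Rb: "\<And>z. z \<bullet> (M *v z) \<le> R * (norm z)^2"
      using rayleigh_max[OF Msym] by blast
    have "x0 \<noteq> 0" using x0(1) by auto
    then have Rmu: "R \<le> \<mu>" using topv[of x0 R] x0(2) by blast
    have kle: "k \<le> CARD('n)" using kd by (simp add: d_def)
    obtain x where x: "x \<noteq> 0" "\<forall>i\<in>{1..<k}. v i \<bullet> x = 0"
      "\<forall>j\<in>{1..CARD('n)}. k < j \<longrightarrow> x \<bullet> u j = 0"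
      using test_vector[OF orth k(1) kle, of v] by blast
    have xMx: "x \<bullet> (M *v x) = x \<bullet> (S *v x)"
      using x(2) by (simp add: Mq A_def)
    have "lam k * (x \<bullet> x) = (\<Sum>j\<in>N. lam k * ((x \<bullet> u j) * (x \<bullet> u j)))"
      by (simp add: pars[of x x] sum_distrib_left)
    also have "\<dots> \<le> (\<Sum>j\<in>N. lam j * (x \<bullet> u j) * (x \<bullet> u j))"
    proof (rule sum_mono)
      fix j assume jN: "j \<in> N"
      show "lam k * ((x \<bullet> u j) * (x \<bullet> u j)) \<le> lam j * (x \<bullet> u j) * (x \<bullet> u j)"
      proof (cases "k < j")
        case True then show ?thesis using x(3) jN by (simp add: N_def d_def)
      next
        case False
        then have "lam k \<le> lam j" using decN[OF jN kN(1)] by (cases "j = k") auto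
        then show ?thesis by (simp add: mult.assoc mult_right_mono)
      qed
    qed
    also have "\<dots> = x \<bullet> (M *v x)" using xMx sform[of x x] by simp
    also have "\<dots> \<le> R * (x \<bullet> x)" using Rb[of x] by (simp add: power2_norm_eq_inner)
    finally have "lam k * (x \<bullet> x) \<le> R * (x \<bullet> x)" .
    moreover have "x \<bullet> x > 0" using x(1) by simp
    ultimately have "lam k \<le> R" by simp
    then show ?thesis using Rmu by simp
  qed
  define c where "c j = w \<bullet> u j" for j
  define q where "q i = v i \<bullet> w" for i
  have ww: "w \<bullet> w = 1" using w1 by (simp add: norm_eq_1)
  have c1: "\<bar>c j\<bar> \<le> 1" if "j \<in> N" for j
    using Cauchy_Schwarz_ineq2[of w "u j"] w1 unorm[OF that] by (simp add: c_def)
  have q1: "\<bar>q i\<bar> \<le> 1" if "i \<in> A" for i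
    using Cauchy_Schwarz_ineq2[of "v i" w] w1 vA[OF that] by (simp add: q_def)
  have qc: "\<bar>q i - c i\<bar> \<le> \<delta> i" for i
  proof -
    have "q i - c i = (v i - u i) \<bullet> w" by (simp add: q_def c_def inner_diff_left inner_diff_right inner_commute)
    then have "\<bar>q i - c i\<bar> \<le> norm (v i - u i) * norm w" by (simp add: Cauchy_Schwarz_ineq2)
    then show ?thesis using w1 by (simp add: \<delta>_def norm_minus_commute)
  qed
  have csum: "(\<Sum>j\<in>N. c j * c j) = 1" using pars[of w w] ww by (simp add: c_def)
  have mu_eq: "\<mu> = (\<Sum>j\<in>N. lam j * c j * c j) - (\<Sum>i\<in>A. a i * q i * q i)"
  proof -
    have "\<mu> = w \<bullet> (M *v w)" using Mw ww by simp
    also have "\<dots> = (\<Sum>j\<in>N. lam j * c j * c j) - (\<Sum>i\<in>A. a i * q i * q i)"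
      by (simp add: Mq sform c_def q_def)
    finally show ?thesis .
  qed
  have mu_ub: "\<mu> \<le> lam k + 4 * \<epsilon>"
  proof -
    have sp: "(\<Sum>j\<in>N. f j) = (\<Sum>j\<in>A. f j) + f k + (\<Sum>j\<in>B. f j)" for f :: "nat \<Rightarrow> real"
      unfolding N_def A_def B_def using k kd by (intro split_sum) auto
    have e1: "(\<Sum>j\<in>A. lam j * c j * c j) - (\<Sum>i\<in>A. a i * q i * q i) \<le> 4 * \<epsilon>"
    proof -
      have "(\<Sum>j\<in>A. lam j * c j * c j) - (\<Sum>i\<in>A. a i * q i * q i)
          = (\<Sum>i\<in>A. lam i * (c i)^2 - a i * (q i)^2)"
        by (simp add: sum_subtractf power2_eq_square mult.assoc)
      also have "\<dots> \<le> (\<Sum>i\<in>A. 4 * (lam i * \<delta> i))"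
      proof (rule sum_mono)
        fix i assume iA: "i \<in> A"
        have iN: "i \<in> N" using iA AN by auto
        show "lam i * (c i)^2 - a i * (q i)^2 \<le> 4 * (lam i * \<delta> i)"
          using r_energy[OF lam_nn[OF iN] \<delta>0 a_nn a_lb[OF iA] c1[OF iN] q1[OF iA] qc] by simp
      qed
      also have "\<dots> = 4 * \<epsilon>" by (simp add: \<epsilon>_def sum_distrib_left)
      finally show ?thesis .
    qed
    have e2: "lam k * c k * c k + (\<Sum>j\<in>B. lam j * c j * c j) \<le> lam k"
    proof -
      have "(\<Sum>j\<in>B. lam j * c j * c j) \<le> (\<Sum>j\<in>B. lam k * (c j * c j))"
      proof (rule sum_mono)
        fix j assume jB: "j \<in> B"
        have "lam j \<le> lam k" using decN[OF kN(1), of j] jB BN by (auto simp: B_def)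
        then show "lam j * c j * c j \<le> lam k * (c j * c j)"
          by (simp add: mult.assoc mult_right_mono)
      qed
      moreover have "lam k * c k * c k + (\<Sum>j\<in>B. lam k * (c j * c j)) \<le> lam k * 1"
      proof -
        have "c k * c k + (\<Sum>j\<in>B. c j * c j) \<le> 1"
          using csum sp[of "\<lambda>j. c j * c j"] sum_nonneg[of A "\<lambda>j. c j * c j"] by simp
        then have "lam k * (c k * c k + (\<Sum>j\<in>B. c j * c j)) \<le> lam k * 1"
          using lam_nn[OF kN(1)] by (rule mult_left_mono)
        then show ?thesis by (simp add: algebra_simps sum_distrib_left)
      qed
      ultimately show ?thesis by simp
    qed
    show ?thesis using mu_eq sp[of "\<lambda>j. lam j * c j * c j"] e1 e2 by simp
  qed
  have goal_eq: "4 * c0 / (lam k - lam (k + 1)) * (\<Sum>k'\<in>{1..<k}. lam k' * norm (u k' - v k')) = 4 * c0 / g * \<epsilon>"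
    by (simp add: g_def \<epsilon>_def A_def \<delta>_def)
  have sm: "4 * c0 * \<epsilon> \<le> (c0 - 1) * g"
  proof -
    have "\<epsilon> \<le> (c0 - 1) / (4 * c0) * g" using small by (simp add: g_def \<epsilon>_def A_def \<delta>_def)
    then have "4 * c0 * \<epsilon> \<le> 4 * c0 * ((c0 - 1) / (4 * c0) * g)" using c0 by (intro mult_left_mono) auto
    also have "\<dots> = (c0 - 1) * g" using c0 by (simp add: field_simps)
    finally show ?thesis .
  qed
  have ck0: "0 \<le> c k" using sign by (simp add: c_def)
  have ck1: "c k \<le> 1" using c1[OF kN(1)] by simp
  have nwu: "(norm (w - u k))^2 = 2 - 2 * c k"
  proof -
    have "u k \<bullet> u k = 1" using orthN[OF kN(1) kN(1)] by simp
    then show ?thesis using ww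
      by (simp add: power2_norm_eq_inner inner_diff_left inner_diff_right inner_commute c_def)
  qed
  have sp: "(\<Sum>j\<in>N. f j) = (\<Sum>j\<in>A. f j) + f k + (\<Sum>j\<in>B. f j)" for f :: "nat \<Rightarrow> real"
    unfolding N_def A_def B_def using k kd by (intro split_sum) auto
  have main: "norm (w - u k) \<le> 4 * c0 / g * \<epsilon>"
  proof (cases "3 * g \<le> 20 * \<epsilon>")
    case True
    have "(norm (w - u k))^2 \<le> 2" using nwu ck0 by simp
    then show ?thesis using r_big[OF gpos \<epsilon>0 True sm c0 norm_ge_zero] by blast
  next
    case False
    then have sm20: "20 * \<epsilon> < 3 * g" by simp
    define D where "D = lam k - 2 * \<epsilon>"
    define G where "G = g - 2 * \<epsilon>"
    have lkp: "0 < lam k" using gpos lkg by simp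
    have e15: "20 * \<epsilon> \<le> 3 * lam k" using sm20 lkg by simp
    have Dp: "0 < D" using e15 \<epsilon>0 lkp by (simp add: D_def)
    have GD: "G \<le> D" using lkg by (simp add: G_def D_def)
    have Gp: "0 < G" using sm20 \<epsilon>0 by (simp add: G_def)
    have Gg: "G \<le> g" using \<epsilon>0 by (simp add: G_def)
    have mu_pos: "0 \<le> \<mu>" using mu_lb lkp by simp
    define e where "e i = v i - u i" for i
    have en: "norm (e i) = \<delta> i" for i by (simp add: e_def \<delta>_def norm_minus_commute)
    define \<beta> where "\<beta> i = a i * q i" for i
    define Eb where "Eb = (\<Sum>i\<in>A. \<beta> i *\<^sub>R e i)"
    define \<rho> where "\<rho> j = u j \<bullet> Eb" for j
    define X where "X = norm Eb"
    have X0: "0 \<le> X" by (simp add: X_def)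
    have comp: "(lam j - \<mu>) * c j = (if j \<in> A then \<beta> j else 0) + \<rho> j" if jN: "j \<in> N" for j
    proof -
      have "\<mu> * c j = u j \<bullet> (M *v w)" using Mw by (simp add: c_def inner_commute)
      also have "\<dots> = u j \<bullet> (S *v w) - (\<Sum>i\<in>A. \<beta> i * (v i \<bullet> u j))"
        by (simp add: Mq \<beta>_def q_def)
      also have "u j \<bullet> (S *v w) = lam j * c j"
        using Ssym[of "u j" w] Sui[OF jN, of w] by (simp add: c_def)
      also have "(\<Sum>i\<in>A. \<beta> i * (v i \<bullet> u j)) = (\<Sum>i\<in>A. \<beta> i * (u i \<bullet> u j)) + \<rho> j"
        by (simp add: \<rho>_def Eb_def e_def inner_sum_right inner_diff_left inner_diff_right
            algebra_simps sum.distrib sum_subtractf inner_commute)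
      also have "(\<Sum>i\<in>A. \<beta> i * (u i \<bullet> u j)) = (\<Sum>i\<in>A. if i = j then \<beta> j else 0)"
        by (rule sum.cong) (use orthN AN jN in auto)
      also have "\<dots> = (if j \<in> A then \<beta> j else 0)" by (simp add: A_def)
      finally show ?thesis by (simp add: algebra_simps)
    qed
    have Xb: "X \<le> (\<Sum>i\<in>A. \<bar>\<beta> i\<bar> * \<delta> i)"
    proof -
      have "X \<le> (\<Sum>i\<in>A. norm (\<beta> i *\<^sub>R e i))" unfolding X_def Eb_def by (rule norm_sum)
      also have "\<dots> = (\<Sum>i\<in>A. \<bar>\<beta> i\<bar> * \<delta> i)" by (simp add: en)
      finally show ?thesis .
    qed
    have \<rho>X: "\<bar>\<rho> j\<bar> \<le> X" if "j \<in> N" for j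
      using Cauchy_Schwarz_ineq2[of "u j" Eb] unorm[OF that] by (simp add: \<rho>_def X_def)
    have \<rho>sum: "(\<Sum>j\<in>N. \<rho> j * \<rho> j) = X^2"
      using pars[of Eb Eb] by (simp add: \<rho>_def X_def power2_norm_eq_inner inner_commute)
    have cA: "\<bar>c j\<bar> * D \<le> lam j * \<delta> j + \<bar>\<rho> j\<bar>" if jA: "j \<in> A" for j
    proof -
      have jN: "j \<in> N" using jA AN by auto
      have eq: "(lam j - \<mu>) * c j = a j * (c j + (q j - c j)) + \<rho> j"
        using comp[OF jN] jA by (simp add: \<beta>_def)
      show ?thesis unfolding D_def
        by (rule r_cbound[OF eq qc a_lb[OF jA] a_nn mu_lb less_imp_le[OF lamA[OF jA]]
              \<epsilon>i[OF jA] \<delta>0 lam_nn[OF jN]]) (use e15 \<epsilon>0 lkp in linarith)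
    qed
    have \<beta>b: "\<bar>\<beta> j\<bar> \<le> lam j * \<bar>c j\<bar> + \<bar>\<rho> j\<bar>" if jA: "j \<in> A" for j
    proof -
      have jN: "j \<in> N" using jA AN by auto
      have eq: "\<beta> j = (lam j - \<mu>) * c j - \<rho> j" using comp[OF jN] jA by simp
      have lm: "\<bar>lam j - \<mu>\<bar> \<le> lam j" using mu_pos mu_ub e15 lamA[OF jA] by linarith
      have "\<bar>\<beta> j\<bar> \<le> \<bar>lam j - \<mu>\<bar> * \<bar>c j\<bar> + \<bar>\<rho> j\<bar>" unfolding eq
        by (metis abs_mult abs_triangle_ineq4)
      also have "\<dots> \<le> lam j * \<bar>c j\<bar> + \<bar>\<rho> j\<bar>" using lm by (simp add: mult_right_mono)
      finally show ?thesis .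
    qed
    have \<tau>: "(\<Sum>i\<in>A. \<delta> i) \<le> \<epsilon> / lam k"
    proof -
      have "lam k * (\<Sum>i\<in>A. \<delta> i) \<le> \<epsilon>" unfolding \<epsilon>_def sum_distrib_left
        by (rule sum_mono) (use lamA \<delta>0 in \<open>simp add: less_imp_le mult_right_mono\<close>)
      then show ?thesis using lkp by (simp add: le_divide_eq mult.commute)
    qed
    have Bs: "X \<le> (\<epsilon> * \<epsilon> + \<epsilon> * X) / D + X * (\<epsilon> / lam k)"
    proof -
      have "(\<Sum>i\<in>A. \<bar>\<beta> i\<bar> * \<delta> i) \<le> (\<Sum>i\<in>A. (lam i * \<delta> i) * ((\<epsilon> + X) / D) + X * \<delta> i)"
      proof (rule sum_mono)
        fix i assume iA: "i \<in> A"
        have iN: "i \<in> N" using iA AN by auto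
        have ci: "\<bar>c i\<bar> \<le> (\<epsilon> + X) / D"
        proof -
          have "\<bar>c i\<bar> * D \<le> \<epsilon> + X" using cA[OF iA] \<epsilon>i[OF iA] \<rho>X[OF iN] by linarith
          then show ?thesis using Dp by (simp add: le_divide_eq)
        qed
        have "\<bar>\<beta> i\<bar> \<le> lam i * ((\<epsilon> + X) / D) + X"
          using \<beta>b[OF iA] \<rho>X[OF iN] mult_left_mono[OF ci lam_nn[OF iN]] by linarith
        then have "\<bar>\<beta> i\<bar> * \<delta> i \<le> (lam i * ((\<epsilon> + X) / D) + X) * \<delta> i"
          using \<delta>0 by (rule mult_right_mono)
        then show "\<bar>\<beta> i\<bar> * \<delta> i \<le> (lam i * \<delta> i) * ((\<epsilon> + X) / D) + X * \<delta> i"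
          by (simp add: algebra_simps)
      qed
      also have "\<dots> = \<epsilon> * ((\<epsilon> + X) / D) + X * (\<Sum>i\<in>A. \<delta> i)"
        unfolding sum.distrib sum_distrib_right[symmetric] sum_distrib_left[symmetric] \<epsilon>_def ..
      also have "\<dots> \<le> \<epsilon> * ((\<epsilon> + X) / D) + X * (\<epsilon> / lam k)"
        using mult_left_mono[OF \<tau> X0] by simp
      also have "\<epsilon> * ((\<epsilon> + X) / D) = (\<epsilon> * \<epsilon> + \<epsilon> * X) / D" by (simp add: algebra_simps)
      finally show ?thesis using Xb by linarith
    qed
    have Xe: "X \<le> \<epsilon> / 2" by (rule r_X[OF lkp \<epsilon>0 e15 D_def X0 Bs])
    have sumA: "G^2 * (\<Sum>j\<in>A. c j * c j) \<le> 2 * \<epsilon>^2 + 2 * (\<Sum>j\<in>A. \<rho> j * \<rho> j)"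
    proof -
      have "G^2 * (\<Sum>j\<in>A. c j * c j) \<le> (\<Sum>j\<in>A. 2 * ((lam j * \<delta> j) * \<epsilon>) + 2 * (\<rho> j * \<rho> j))"
        unfolding sum_distrib_left
      proof (rule sum_mono)
        fix j assume jA: "j \<in> A"
        have h: "\<bar>c j\<bar> * G \<le> lam j * \<delta> j + \<bar>\<rho> j\<bar>"
        proof -
          have "\<bar>c j\<bar> * G \<le> \<bar>c j\<bar> * D" using GD by (simp add: mult_left_mono)
          then show ?thesis using cA[OF jA] by linarith
        qed
        have "(\<bar>c j\<bar> * G)^2 \<le> (lam j * \<delta> j + \<bar>\<rho> j\<bar>)^2"
          using h Gp by (intro power_mono) auto
        also have "\<dots> \<le> 2 * (lam j * \<delta> j)^2 + 2 * (\<rho> j)^2"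
          using r_sq[of "lam j * \<delta> j" "\<bar>\<rho> j\<bar>"] by simp
        also have "(lam j * \<delta> j)^2 \<le> (lam j * \<delta> j) * \<epsilon>"
          using \<epsilon>i[OF jA] termnn[OF jA] by (simp add: power2_eq_square mult_left_mono)
        finally show "G^2 * (c j * c j) \<le> 2 * ((lam j * \<delta> j) * \<epsilon>) + 2 * (\<rho> j * \<rho> j)"
          by (simp add: power2_eq_square algebra_simps)
      qed
      also have "\<dots> = 2 * \<epsilon>^2 + 2 * (\<Sum>j\<in>A. \<rho> j * \<rho> j)"
      proof -
        have "(\<Sum>j\<in>A. (lam j * \<delta> j) * \<epsilon>) = \<epsilon> * \<epsilon>"
          by (simp only: \<epsilon>_def sum_distrib_right)
        then show ?thesis
          by (simp add: sum.distrib sum_distrib_left[symmetric] power2_eq_square)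
      qed
      finally show ?thesis .
    qed
    have sumB: "G^2 * (\<Sum>j\<in>B. c j * c j) \<le> (\<Sum>j\<in>B. \<rho> j * \<rho> j)"
      unfolding sum_distrib_left
    proof (rule sum_mono)
      fix j assume jB: "j \<in> B"
      have jN: "j \<in> N" using jB BN by auto
      have jA: "j \<notin> A" using jB by (auto simp: A_def B_def)
      have eq: "(lam j - \<mu>) * c j = \<rho> j" using comp[OF jN] jA by simp
      have lj: "lam j \<le> lam (k+1)"
        using decN[OF kN(2) jN] jB by (cases "j = k + 1") (auto simp: B_def)
      have gap: "G \<le> \<mu> - lam j" using mu_lb lj Gg by (simp add: g_def)
      have "G * \<bar>c j\<bar> \<le> (\<mu> - lam j) * \<bar>c j\<bar>" using gap by (simp add: mult_right_mono)
      also have "\<dots> = \<bar>\<rho> j\<bar>" using eq gap Gp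
        by (metis abs_minus_commute abs_mult abs_of_pos less_le_trans minus_diff_eq mult_minus_left)
      finally have "(G * \<bar>c j\<bar>)^2 \<le> (\<bar>\<rho> j\<bar>)^2" using Gp by (intro power_mono) auto
      then show "G^2 * (c j * c j) \<le> \<rho> j * \<rho> j" by (simp add: power2_eq_square algebra_simps)
    qed
    have rsplit: "(\<Sum>j\<in>A. \<rho> j * \<rho> j) + (\<Sum>j\<in>B. \<rho> j * \<rho> j) \<le> X^2"
    proof -
      have "0 \<le> \<rho> k * \<rho> k" by simp
      then show ?thesis using \<rho>sum sp[of "\<lambda>j. \<rho> j * \<rho> j"] by linarith
    qed
    have csplit: "(\<Sum>j\<in>A. c j * c j) + (\<Sum>j\<in>B. c j * c j) = 1 - c k * c k"
      using csum sp[of "\<lambda>j. c j * c j"] by simp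
    have "G^2 * (1 - c k * c k) = G^2 * (\<Sum>j\<in>A. c j * c j) + G^2 * (\<Sum>j\<in>B. c j * c j)"
      using csplit by (simp add: distrib_left[symmetric])
    then have h1: "G^2 * (1 - c k * c k) \<le> 2 * \<epsilon>^2 + 2 * X^2"
      using sumA sumB rsplit sum_nonneg[of B "\<lambda>j. \<rho> j * \<rho> j"] by simp
    have "c k * c k \<le> 1 * c k" using ck0 ck1 by (intro mult_right_mono)
    then have h2: "(norm (w - u k))^2 \<le> 2 * (1 - c k * c k)" unfolding nwu by simp
    have "G^2 * (norm (w - u k))^2 \<le> G^2 * (2 * (1 - c k * c k))"
      using h2 by (rule mult_left_mono) simp
    also have "\<dots> = 2 * (G^2 * (1 - c k * c k))" by simp
    also have "\<dots> \<le> 2 * (2 * \<epsilon>^2 + 2 * X^2)" using h1 by simp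
    also have "\<dots> \<le> 5 * \<epsilon>^2"
    proof -
      have "X^2 \<le> (\<epsilon>/2)^2" using Xe X0 by (intro power_mono) auto
      then show ?thesis by (simp add: power_divide)
    qed
    finally have fin: "G^2 * (norm (w - u k))^2 \<le> 5 * \<epsilon>^2" .
    have c01: "c0 \<ge> 1" using c0 by simp
    show ?thesis by (rule r_final[OF gpos \<epsilon>0 sm20 G_def c01 norm_ge_zero fin])
  qed
  show ?thesis using main goal_eq by simp
qed


end
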